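(* Let $d\geq 1$, let $p_1<\dots<p_d$ be the first $d$ prime numbers, let $N\geq 1$ be an integer, let $C>1$ and $\varepsilon\in\mathbb{R}$. Let $\mathbf{A}_1$ be the $(d+1)\times(d+1)$ matrix whose $i$-th column ($1\le i\le d$) has entry $\ln p_i$ in row $i$, entry $C\ln p_i$ in row $d+1$ and zeros elsewhere, and whose last column is $(0,\dots,0,C\ln N)^T$. Let $\mathbf{z}\in\mathbb{Z}^{d+1}$ with $z_{d+1}<0$, put $\gamma=|z_{d+1}|\geq 1$, $$u=\prod_{1\le i\le d,\ z_i>0}p_i^{z_i},\qquad k=\prod_{1\le i\le d,\ z_i<0}p_i^{-z_i},$$ and suppose $\|\mathbf{A}_1\mathbf{z}\|_1\leq\varepsilon$. Then $$|u-kN^\gamma|\leq\frac{N^{\gamma/2}}{C}\exp\left(\frac{\varepsilon}{2}\right).$$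
   Context: $\ln$ is the natural logarithm, $\|\cdot\|_1$ the $\ell^1$ norm; empty products equal $1$. *)

theory Defs
  imports "HOL-Analysis.Analysis" "HOL-Computational_Algebra.Primes"
begin

text \<open>The i-th prime number, 1-indexed: pr 1 = 2, pr 2 = 3, ...\<close>
definition pr :: "nat \<Rightarrow> nat" where
  "pr i = enumerate {p::nat. prime p} (i - 1)"

definition A1 :: "nat \<Rightarrow> real \<Rightarrow> nat \<Rightarrow> nat \<Rightarrow> nat \<Rightarrow> real" where
  "A1 d C N r c =
     (if c \<le> d then
        (if r = c then ln (real (pr c)) else if r = d + 1 then C * ln (real (pr c)) else 0)
      else (if r = d + 1 then C * ln (real N) else 0))"

definition mat_vec :: "nat \<Rightarrow> (nat \<Rightarrow> nat \<Rightarrow> real) \<Rightarrow> (nat \<Rightarrow> real) \<Rightarrow> nat \<Rightarrow> real" where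
  "mat_vec n M x r = (\<Sum>c=1..n. M r c * x c)"

definition l1_norm :: "nat \<Rightarrow> (nat \<Rightarrow> real) \<Rightarrow> real" where
  "l1_norm n x = (\<Sum>r=1..n. \<bar>x r\<bar>)"

end

theory Submission imports Defs begin

lemma exp_chord: assumes "0 \<le> s" "s \<le> (1::real)" shows "exp s \<le> 1 + (exp 1 - 1) * s"
proof -
  have "exp ((1 - s) *\<^sub>R 0 + s *\<^sub>R 1) \<le> (1 - s) * exp 0 + s * exp 1"
    using convex_onD[OF exp_convex, of s 0 1] assms by auto
  thus ?thesis by (simp add: algebra_simps)
qed

lemma key: fixes C s :: real assumes "C > 1" "s \<ge> 0"
  shows "C * (exp (2 * s) - 1) \<le> exp ((C+1) * s)"
proof (cases "s \<ge> 1")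
  case True
  have "1 + (C-1) * s \<le> exp ((C-1) * s)" by (rule exp_ge_add_one_self)
  moreover have "(C-1) * 1 \<le> (C-1) * s" using True assms by (intro mult_left_mono) auto
  ultimately have "C \<le> exp ((C-1) * s)" by (smt (verit))
  hence "exp (2 * s) * C \<le> exp (2 * s) * exp ((C-1) * s)" by simp
  also have "\<dots> = exp ((C+1) * s)" by (simp add: exp_add[symmetric] algebra_simps)
  finally have "exp (2 * s) * C \<le> exp ((C+1) * s)" .
  moreover have "C * (exp (2 * s) - 1) \<le> exp (2 * s) * C" using assms by (simp add: algebra_simps)
  ultimately show ?thesis by linarith
next
  case False
  have e1: "exp s \<le> 1 + (exp 1 - 1) * s" using exp_chord[of s] False assms by auto
  have e2: "1 - s \<le> exp (-s)" using exp_ge_add_one_self[of "-s"] by simp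
  have m1: "exp s * exp (-s) = 1" by (simp add: exp_minus)
  have m2: "exp (2 * s) = exp s * exp s" by (simp add: exp_add[symmetric])
  have es: "exp (2 * s) - 1 = exp s * (exp s - exp (-s))"
    by (simp only: m1 m2 right_diff_distrib)
  have d: "exp s - exp (-s) \<le> exp 1 * s" using e1 e2 by (simp add: algebra_simps)
  have c: "C * s * exp 1 \<le> exp (C * s)"
  proof -
    have "C * s \<le> exp (C * s - 1)" using exp_ge_add_one_self[of "C * s - 1"] by simp
    also have "\<dots> = exp (C * s) / exp 1" by (simp add: exp_diff)
    finally show ?thesis by (simp add: pos_le_divide_eq)
  qed
  have "C * (exp (2 * s) - 1) = C * exp s * (exp s - exp (-s))" using es by simp
  also have "\<dots> \<le> C * exp s * (exp 1 * s)"
    using d assms by (intro mult_left_mono) auto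
  also have "\<dots> = exp s * (C * s * exp 1)" by simp
  also have "\<dots> \<le> exp s * exp (C * s)" using c by simp
  also have "\<dots> = exp ((C+1) * s)" by (simp add: exp_add[symmetric] algebra_simps)
  finally show ?thesis .
qed

lemma real_part: fixes x y Lk LN g C \<epsilon> :: real
  assumes "C > 1" "y = Lk + g * LN" "x + Lk + C * \<bar>x - y\<bar> \<le> \<epsilon>"
  shows "\<bar>exp x - exp y\<bar> \<le> exp (g * LN / 2) / C * exp (\<epsilon> / 2)"
proof -
  define s where "s = \<bar>x - y\<bar> / 2"
  define m where "m = (x + y) / 2"
  have s0: "s \<ge> 0" by (simp add: s_def)
  have ab: "\<bar>exp x - exp y\<bar> = exp m * (exp s - exp (-s))"
  proof (cases "x \<ge> y")
    case True
    hence h: "x = m + s" "y = m + (-s)" by (auto simp: m_def s_def field_simps)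
    have "exp m * exp s \<ge> exp m * exp (-s)" using s0 by simp
    thus ?thesis unfolding h exp_add by (simp add: right_diff_distrib)
  next
    case False
    hence h: "y = m + s" "x = m + (-s)" by (auto simp: m_def s_def field_simps)
    have "exp m * exp s \<ge> exp m * exp (-s)" using s0 by simp
    thus ?thesis unfolding h exp_add by (simp add: right_diff_distrib)
  qed
  have m: "m \<le> g * LN / 2 + \<epsilon> / 2 - C * s" using assms by (simp add: m_def s_def field_simps)
  have k: "exp (-(C * s)) * (exp s - exp (-s)) \<le> 1 / C"
  proof -
    have kk: "C * (exp (2 * s) - 1) \<le> exp ((C+1) * s)" using key assms(1) s0 by blast
    have eq1: "exp ((C+1) * s) = exp (C * s) * exp s" by (simp add: exp_add[symmetric] algebra_simps)
    have eq2: "exp (2 * s) - 1 = exp s * (exp s - exp (-s))"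
    proof -
      have m1: "exp s * exp (-s) = 1" by (simp add: exp_minus)
      have m2: "exp (2 * s) = exp s * exp s" by (simp add: exp_add[symmetric])
      show ?thesis by (simp only: m1 m2 right_diff_distrib)
    qed
    have "C * (exp s - exp (-s)) * exp s \<le> exp (C * s) * exp s" using kk eq1 eq2 by (simp add: ac_simps)
    hence "C * (exp s - exp (-s)) \<le> exp (C * s)" by simp
    hence "C * (exp s - exp (-s)) * exp (-(C * s)) \<le> exp (C * s) * exp (-(C * s))" by simp
    hence "C * (exp (-(C * s)) * (exp s - exp (-s))) \<le> 1" by (simp add: exp_minus ac_simps)
    thus ?thesis using assms(1) by (simp add: pos_le_divide_eq ac_simps)
  qed
  have pos: "exp s - exp (-s) \<ge> 0" using s0 by simp
  have "\<bar>exp x - exp y\<bar> \<le> exp (g * LN / 2 + \<epsilon> / 2 + (-(C * s))) * (exp s - exp (-s))"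
    unfolding ab using m pos by (intro mult_right_mono) auto
  also have "\<dots> = exp (g * LN / 2) * exp (\<epsilon> / 2) * (exp (-(C * s)) * (exp s - exp (-s)))"
    by (simp only: exp_add mult.assoc)
  also have "\<dots> \<le> exp (g * LN / 2) * exp (\<epsilon> / 2) * (1 / C)"
    using k by (intro mult_left_mono) auto
  finally show ?thesis by simp
qed

lemma pr_prime: "prime (pr i)"
  unfolding pr_def using enumerate_in_set[OF primes_infinite] by simp

lemma pr_ge2: "real (pr i) \<ge> 2"
  using prime_ge_2_nat[OF pr_prime[of i]] by simp

theorem lemma1:
  fixes d N :: nat and C \<epsilon> :: real and z :: "nat \<Rightarrow> int"
  assumes "d \<ge> 1" and "N \<ge> 1" and "C > 1"
    and "z (d + 1) < 0"
    and "l1_norm (d + 1) (mat_vec (d + 1) (A1 d C N) (\<lambda>i. real_of_int (z i))) \<le> \<epsilon>"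
  shows "let \<gamma> = nat \<bar>z (d + 1)\<bar>;
             u = (\<Prod>i\<in>{i\<in>{1..d}. z i > 0}. pr i ^ nat (z i));
             k = (\<Prod>i\<in>{i\<in>{1..d}. z i < 0}. pr i ^ nat (- z i))
         in \<bar>real u - real k * real N ^ \<gamma>\<bar>
              \<le> real N powr (real \<gamma> / 2) / C * exp (\<epsilon> / 2)"
proof -
  define \<gamma> where "\<gamma> = nat \<bar>z (d + 1)\<bar>"
  define u where "u = (\<Prod>i\<in>{i\<in>{1..d}. z i > 0}. pr i ^ nat (z i))"
  define k where "k = (\<Prod>i\<in>{i\<in>{1..d}. z i < 0}. pr i ^ nat (- z i))"
  define Z where "Z = (\<lambda>i. real_of_int (z i))"
  define lp where "lp = (\<lambda>i. ln (real (pr i)))"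
  define mv where "mv = mat_vec (d + 1) (A1 d C N) Z"
  have lp0: "lp i > 0" for i using pr_ge2[of i] by (simp add: lp_def)
  have g: "real \<gamma> = - Z (d+1)" using assms(4) by (simp add: \<gamma>_def Z_def)
  have mvr: "mv r = lp r * Z r" if r: "r \<in> {1..d}" for r
  proof -
    have "mv r = (\<Sum>c\<in>{1..d+1}. if c = r then lp r * Z r else 0)"
      unfolding mv_def mat_vec_def
      by (rule sum.cong) (use r in \<open>auto simp: A1_def lp_def\<close>)
    also have "\<dots> = lp r * Z r" using r by simp
    finally show ?thesis .
  qed
  have mvd: "mv (d+1) = C * ((\<Sum>c=1..d. lp c * Z c) + ln (real N) * Z (d+1))"
  proof -
    have "mv (d+1) = (\<Sum>c=1..d. A1 d C N (d+1) c * Z c) + A1 d C N (d+1) (d+1) * Z (d+1)"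
      unfolding mv_def mat_vec_def by simp
    also have "(\<Sum>c=1..d. A1 d C N (d+1) c * Z c) = (\<Sum>c=1..d. C * (lp c * Z c))"
      by (rule sum.cong) (auto simp: A1_def lp_def)
    finally show ?thesis by (simp add: A1_def sum_distrib_left[symmetric] algebra_simps)
  qed
  have l1: "l1_norm (d+1) mv = (\<Sum>r=1..d. lp r * \<bar>Z r\<bar>) + \<bar>mv (d+1)\<bar>"
  proof -
    have "l1_norm (d+1) mv = (\<Sum>r=1..d. \<bar>mv r\<bar>) + \<bar>mv (d+1)\<bar>" unfolding l1_norm_def by simp
    also have "(\<Sum>r=1..d. \<bar>mv r\<bar>) = (\<Sum>r=1..d. lp r * \<bar>Z r\<bar>)"
      by (rule sum.cong) (auto simp: mvr abs_mult lp0 less_imp_le)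
    finally show ?thesis .
  qed
  define Lu where "Lu = (\<Sum>i=1..d. if z i > 0 then lp i * Z i else 0)"
  define Lk where "Lk = (\<Sum>i=1..d. if z i < 0 then lp i * (- Z i) else 0)"
  have s1: "(\<Sum>r=1..d. lp r * \<bar>Z r\<bar>) = Lu + Lk"
    unfolding Lu_def Lk_def sum.distrib[symmetric] by (rule sum.cong) (auto simp: Z_def)
  have s2: "(\<Sum>r=1..d. lp r * Z r) = Lu - Lk"
    unfolding Lu_def Lk_def sum_subtractf[symmetric] by (rule sum.cong) (auto simp: Z_def)
  have u: "ln (real u) = Lu"
  proof -
    have "ln (real u) = (\<Sum>i\<in>{i\<in>{1..d}. z i > 0}. ln (real (pr i) ^ nat (z i)))"
      unfolding u_def of_nat_prod of_nat_power
      using prime_gt_0_nat[OF pr_prime] by (subst ln_prod) (auto intro!: sum.cong)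
    also have "\<dots> = (\<Sum>i\<in>{i\<in>{1..d}. z i > 0}. lp i * Z i)"
      by (rule sum.cong) (auto simp: ln_realpow lp_def Z_def)
    also have "\<dots> = Lu" unfolding Lu_def by (rule sum.inter_filter) simp
    finally show ?thesis .
  qed
  have k: "ln (real k) = Lk"
  proof -
    have "ln (real k) = (\<Sum>i\<in>{i\<in>{1..d}. z i < 0}. ln (real (pr i) ^ nat (- z i)))"
      unfolding k_def of_nat_prod of_nat_power
      using prime_gt_0_nat[OF pr_prime] by (subst ln_prod) (auto intro!: sum.cong)
    also have "\<dots> = (\<Sum>i\<in>{i\<in>{1..d}. z i < 0}. lp i * (- Z i))"
      by (rule sum.cong) (auto simp: ln_realpow lp_def Z_def)
    also have "\<dots> = Lk" unfolding Lk_def by (rule sum.inter_filter) simp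
    finally show ?thesis .
  qed
  have upos: "real u > 0" unfolding u_def
    using prime_gt_0_nat[OF pr_prime] by (auto intro!: prod_pos simp: of_nat_prod)
  have kpos: "real k > 0" unfolding k_def
    using prime_gt_0_nat[OF pr_prime] by (auto intro!: prod_pos simp: of_nat_prod)
  have Npos: "real N > 0" using assms(2) by simp
  define y where "y = Lk + real \<gamma> * ln (real N)"
  have hyp: "Lu + Lk + C * \<bar>Lu - y\<bar> \<le> \<epsilon>"
  proof -
    have "mv (d+1) = C * (Lu - y)" unfolding mvd s2 y_def g by (simp add: algebra_simps)
    hence "\<bar>mv (d+1)\<bar> = C * \<bar>Lu - y\<bar>" using assms(3) by (simp add: abs_mult)
    thus ?thesis using assms(5) l1 s1 unfolding mv_def Z_def by simp
  qed
  have main: "\<bar>exp Lu - exp y\<bar> \<le> exp (real \<gamma> * ln (real N) / 2) / C * exp (\<epsilon> / 2)"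
    by (rule real_part[OF assms(3) y_def hyp])
  have eu: "exp Lu = real u" using u upos by (metis exp_ln)
  have ek: "exp Lk = real k" using k kpos by (metis exp_ln)
  have ey: "exp y = real k * real N ^ \<gamma>"
    unfolding y_def exp_add using ek Npos by (simp add: exp_of_nat_mult)
  have en: "exp (real \<gamma> * ln (real N) / 2) = real N powr (real \<gamma> / 2)"
    using Npos by (simp add: powr_def)
  show ?thesis using main unfolding eu ey en Let_def \<gamma>_def[symmetric] u_def[symmetric] k_def[symmetric] .
qed
end
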